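(* Assume the setting described in the context and suppose the event $\mathcal{E}$ holds. Let $\gamma\in(0,1)$, let $S\subseteq[n]$ with $|S|=k$ and $\|\mathbf{v}_S\|_2\ge\sqrt\gamma$, and let $\mathbf{w}^{(0)}$ be a unit eigenvector for the largest eigenvalue of $\hat{\boldsymbol{\Gamma}}_{S,S}$, zero-padded to $\mathbb{R}^n$. Then there is an absolute constant $C_1>0$ such that $$ \alpha_0:=|\langle\mathbf{w}^{(0)},\mathbf{v}\rangle|\ \ge\ \sqrt\gamma\sqrt{\Big(1-\frac{C_1(1+\theta)^2}{\theta^2\gamma^2}\cdot\frac{k\log n}{m}\Big)_+}, $$ where $(x)_+=\max\{x,0\}$. In particular, there are absolute constants $C>0$ and $c_0\in(0,1/2]$ such that if $m\ge C\frac{(1+\theta)^2}{\theta^2\gamma^2}k\log n$, then $\alpha_0\ge c_0\gamma$.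
   Context: Let $n\ge 2$, $m\ge1$, $\theta>0$, $k\in[n]$; $\mathbf{v}\in\mathbb{R}^n$ a unit vector with at most $k$ nonzero entries; $\mathbf{x}_1,\dots,\mathbf{x}_m$ i.i.d. $\mathcal{N}(\mathbf{0},\mathbf{I}_n+\theta\mathbf{v}\mathbf{v}^\top)$; $\hat{\boldsymbol{\Gamma}}=\frac1m\sum_i\mathbf{x}_i\mathbf{x}_i^\top-\mathbf{I}_n$; $\mathbf{W}=\hat{\boldsymbol{\Gamma}}-\theta\mathbf{v}\mathbf{v}^\top$. $\mathbf{v}_S$ is the restriction of $\mathbf{v}$ to $S$, $\hat{\boldsymbol{\Gamma}}_{S,S}$ a principal submatrix, $\|\cdot\|_2$ Euclidean/spectral norm. Fix an absolute constant $C_0>0$; $\mathcal{E}$ is the event that $\|\mathbf{W}_{S,S}\|_2\le C_0(1+\theta)\sqrt{|S|\log n/m}$ for all nonempty $S\subseteq[n]$. (In the paper, $S$ is the final support $S^{(k)}$ of the SEP algorithm and $\mathbf{w}^{(0)}$ its output.) Absolute constants do not depend on $n,m,k,\theta,\mathbf{v},\gamma$. *)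

theory Defs
  imports "HOL-Analysis.Analysis"
begin

text \<open>Vectors in R^n are functions nat => real (index set [n] = {0..<n});
  n x n matrices are functions nat => nat => real.\<close>

definition sub_opnorm :: "nat set \<Rightarrow> (nat \<Rightarrow> nat \<Rightarrow> real) \<Rightarrow> real" where
  "sub_opnorm S A =
     (SUP u \<in> {u :: nat \<Rightarrow> real. (\<Sum>j\<in>S. (u j)^2) \<le> 1}.
        sqrt (\<Sum>i\<in>S. (\<Sum>j\<in>S. A i j * u j)^2))"

definition Gamma_hat :: "nat \<Rightarrow> (nat \<Rightarrow> nat \<Rightarrow> real) \<Rightarrow> nat \<Rightarrow> nat \<Rightarrow> real" where
  "Gamma_hat m x i j = (\<Sum>l<m. x l i * x l j) / real m - (if i = j then 1 else 0)"

definition top_eigvec_sub :: "nat set \<Rightarrow> (nat \<Rightarrow> nat \<Rightarrow> real) \<Rightarrow> (nat \<Rightarrow> real) \<Rightarrow> bool" where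
  "top_eigvec_sub S A w \<longleftrightarrow>
     (\<forall>i. i \<notin> S \<longrightarrow> w i = 0) \<and> (\<Sum>i\<in>S. (w i)^2) = 1 \<and>
     (\<exists>lam. (\<forall>i\<in>S. (\<Sum>j\<in>S. A i j * w j) = lam * w i) \<and>
        (\<forall>mu u. (\<exists>i\<in>S. u i \<noteq> 0) \<and> (\<forall>i\<in>S. (\<Sum>j\<in>S. A i j * u j) = mu * u i)
                 \<longrightarrow> mu \<le> lam))"

end

theory Submission
  imports Defs
begin

definition bil :: "nat set \<Rightarrow> (nat \<Rightarrow> nat \<Rightarrow> real) \<Rightarrow> (nat \<Rightarrow> real) \<Rightarrow> (nat \<Rightarrow> real) \<Rightarrow> real" where
  "bil S A x y = (\<Sum>i\<in>S. x i * (\<Sum>j\<in>S. A i j * y j))"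

definition ip :: "nat set \<Rightarrow> (nat \<Rightarrow> real) \<Rightarrow> (nat \<Rightarrow> real) \<Rightarrow> real" where
  "ip S x y = (\<Sum>i\<in>S. x i * y i)"

lemma bil_sym:
  assumes "\<forall>i\<in>S. \<forall>j\<in>S. A i j = A j i"
  shows "bil S A x y = bil S A y x"
proof -
  have "bil S A x y = (\<Sum>i\<in>S. \<Sum>j\<in>S. x i * A i j * y j)"
    unfolding bil_def by (simp add: sum_distrib_left mult.assoc)
  also have "\<dots> = (\<Sum>j\<in>S. \<Sum>i\<in>S. x i * A i j * y j)" by (rule sum.swap)
  also have "\<dots> = (\<Sum>j\<in>S. \<Sum>i\<in>S. y j * A j i * x i)"
    using assms by (intro sum.cong refl) (simp add: mult.commute mult.left_commute)
  also have "\<dots> = bil S A y x"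
    unfolding bil_def by (simp add: sum_distrib_left mult.assoc)
  finally show ?thesis .
qed

lemma bil_add_left: "bil S A (\<lambda>i. x i + t * y i) z = bil S A x z + t * bil S A y z"
  unfolding bil_def by (simp add: algebra_simps sum.distrib sum_distrib_left)

lemma bil_add_right: "bil S A z (\<lambda>i. x i + t * y i) = bil S A z x + t * bil S A z y"
  unfolding bil_def by (simp add: algebra_simps sum.distrib sum_distrib_left)

lemma bil_scale: "bil S A (\<lambda>i. c * x i) (\<lambda>i. c * x i) = c^2 * bil S A x x"
  unfolding bil_def by (simp add: algebra_simps sum_distrib_left power2_eq_square)

lemma bil_cong: "(\<And>i. i \<in> S \<Longrightarrow> x i = x' i) \<Longrightarrow> (\<And>i. i \<in> S \<Longrightarrow> y i = y' i) \<Longrightarrow>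
   bil S A x y = bil S A x' y'"
  unfolding bil_def by (intro sum.cong refl) auto

lemma compact_box_fun:
  fixes S :: "nat set"
  shows "compact (PiE UNIV (\<lambda>i. if i \<in> S then {-1..1::real} else {0}))"
proof -
  have "compactin (product_topology (\<lambda>_. euclidean) UNIV) (PiE UNIV (\<lambda>i. if i \<in> S then {-1..1::real} else {0}))"
    unfolding compactin_PiE by auto
  then show ?thesis by (simp add: euclidean_product_topology)
qed

lemma max_eig:
  fixes A :: "nat \<Rightarrow> nat \<Rightarrow> real"
  assumes fin: "finite S" and ne: "S \<noteq> {}" and sym: "\<forall>i\<in>S. \<forall>j\<in>S. A i j = A j i"
  shows "\<exists>z \<mu>. (\<Sum>i\<in>S. (z i)^2) = 1 \<and> (\<forall>i\<in>S. (\<Sum>j\<in>S. A i j * z j) = \<mu> * z i) \<and>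
           (\<forall>y. bil S A y y \<le> \<mu> * (\<Sum>i\<in>S. (y i)^2))"
proof -
  define K where "K = PiE UNIV (\<lambda>i. if i \<in> S then {-1..1::real} else {0}) \<inter> {u. (\<Sum>i\<in>S. (u i)^2) = 1}"
  have cK: "compact K"
    unfolding K_def
    by (intro compact_Int_closed compact_box_fun closed_Collect_eq continuous_intros continuous_on_product_coordinates)
  obtain i0 where i0: "i0 \<in> S" using ne by auto
  have "(\<Sum>i\<in>S. (if i = i0 then 1 else 0::real)^2) = (\<Sum>i\<in>S. if i = i0 then 1 else 0::real)"
    by (intro sum.cong) auto
  also have "\<dots> = 1" using fin i0 by simp
  finally have "(\<lambda>i. if i = i0 then 1 else 0::real) \<in> K"
    unfolding K_def using fin i0 by auto
  then have neK: "K \<noteq> {}" by auto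
  have contq: "continuous_on K (\<lambda>u. bil S A u u)"
    unfolding bil_def
    by (intro continuous_intros continuous_on_product_coordinates continuous_on_subset[OF _ subset_UNIV])
  obtain z where zK: "z \<in> K" and zmax: "\<forall>y\<in>K. bil S A y y \<le> bil S A z z"
    using continuous_attains_sup[OF cK neK contq] by blast
  define \<mu> where "\<mu> = bil S A z z"
  have nz: "(\<Sum>i\<in>S. (z i)^2) = 1" using zK K_def by auto
  have glob: "bil S A y y \<le> \<mu> * (\<Sum>i\<in>S. (y i)^2)" for y
  proof -
    define N where "N = (\<Sum>i\<in>S. (y i)^2)"
    have N0: "N \<ge> 0" unfolding N_def by (simp add: sum_nonneg)
    show ?thesis
    proof (cases "N = 0")
      case True
      then have "\<forall>i\<in>S. y i = 0" unfolding N_def using fin by (simp add: sum_nonneg_eq_0_iff)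
      then have "bil S A y y = 0" unfolding bil_def by simp
      then show ?thesis using True N_def by simp
    next
      case False
      then have Np: "N > 0" using N0 by simp
      define u where "u = (\<lambda>i. if i \<in> S then (1 / sqrt N) * y i else 0)"
      have nu: "(\<Sum>i\<in>S. (u i)^2) = 1"
      proof -
        have "(\<Sum>i\<in>S. (u i)^2) = (\<Sum>i\<in>S. (y i)^2 / N)"
          unfolding u_def using Np by (intro sum.cong refl) (simp add: power_divide)
        also have "\<dots> = N / N" unfolding N_def by (rule sum_divide_distrib[symmetric])
        finally show ?thesis using Np by simp
      qed
      have "u \<in> K"
      proof -
        have "\<bar>u i\<bar> \<le> 1" if "i \<in> S" for i
        proof -
          have "(u i)^2 \<le> (\<Sum>i\<in>S. (u i)^2)"
            by (rule member_le_sum[OF that]) (auto simp: fin)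
          then have "(u i)^2 \<le> 1^2" using nu by simp
          then show ?thesis by (metis abs_le_square_iff abs_one)
        qed
        then have "u i \<in> (if i \<in> S then {-1..1} else {0})" for i
          by (cases "i \<in> S") (auto simp: abs_le_iff, auto simp: u_def)
        then show ?thesis unfolding K_def using nu by (auto simp: PiE_iff)
      qed
      then have "bil S A u u \<le> \<mu>" using zmax \<mu>_def by auto
      moreover have "bil S A u u = (1 / sqrt N)^2 * bil S A y y"
        by (subst bil_scale[symmetric]) (rule bil_cong, auto simp: u_def)
      ultimately have "bil S A y y / N \<le> \<mu>" using Np by (simp add: power_divide)
      then show ?thesis using Np N_def by (simp add: divide_le_eq mult.commute)
    qed
  qed
  define r where "r = (\<lambda>i. \<mu> * z i - (\<Sum>j\<in>S. A i j * z j))"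
  define N where "N = (\<Sum>i\<in>S. (r i)^2)"
  define p where "p = \<mu> * N - bil S A r r"
  have p0: "p \<ge> 0" using glob[of r] unfolding p_def N_def by simp
  have N0: "N \<ge> 0" unfolding N_def by (simp add: sum_nonneg)
  have key: "0 \<le> 2 * t * N + t^2 * p" for t
  proof -
    have e1: "bil S A (\<lambda>i. z i + t * r i) (\<lambda>i. z i + t * r i) = \<mu> + 2 * t * bil S A r z + t^2 * bil S A r r"
      using bil_sym[OF sym, of z r] unfolding bil_add_left bil_add_right \<mu>_def
      by (simp add: algebra_simps power2_eq_square)
    have e2: "(\<Sum>i\<in>S. (z i + t * r i)^2) = 1 + 2 * t * ip S z r + t^2 * N"
      using nz unfolding ip_def N_def
      by (simp add: power2_eq_square algebra_simps sum.distrib sum_distrib_left)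
    have e3: "\<mu> * ip S z r - bil S A r z = N"
      unfolding ip_def bil_def N_def r_def
      by (simp add: sum_distrib_left sum_subtractf[symmetric] power2_eq_square algebra_simps)
    have "bil S A (\<lambda>i. z i + t * r i) (\<lambda>i. z i + t * r i) \<le> \<mu> * (\<Sum>i\<in>S. (z i + t * r i)^2)"
      by (rule glob)
    then have i1: "\<mu> + 2 * t * bil S A r z + t^2 * bil S A r r \<le> \<mu> * (1 + 2 * t * ip S z r + t^2 * N)"
      using e1 e2 by simp
    have h: "\<mu> * (1 + 2 * t * ip S z r + t^2 * N) = \<mu> + 2 * t * (\<mu> * ip S z r) + t^2 * (\<mu> * N)"
      by (simp add: algebra_simps)
    have h2: "2 * t * (\<mu> * ip S z r) = 2 * t * N + 2 * t * bil S A r z"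
      using e3 by (simp add: algebra_simps)
    have h3: "t^2 * p = t^2 * (\<mu> * N) - t^2 * bil S A r r" unfolding p_def by (simp add: algebra_simps)
    show ?thesis using i1 h h2 h3 by linarith
  qed
  have "N = 0"
  proof -
    have "0 \<le> 2 * (- N / (p + 1)) * N + (- N / (p + 1))^2 * p" by (rule key)
    then have "0 \<le> (2 * (- N / (p + 1)) * N + (- N / (p + 1))^2 * p) * (p+1)^2"
      using p0 by simp
    also have "\<dots> = - (N^2 * (p + 2))"
    proof -
      have q: "p + 1 \<noteq> 0" using p0 by simp
      have a1: "(- N / (p + 1))^2 * p * (p+1)^2 = N^2 * p" using q by (simp add: power_divide)
      have a2: "2 * (- N / (p + 1)) * N * (p+1)^2 = -2 * N^2 * (p+1)"
        using q by (simp add: power2_eq_square field_simps)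
      show ?thesis unfolding distrib_right a1 a2 by (simp add: algebra_simps)
    qed
    finally have "N^2 * (p+2) \<le> 0" by simp
    then have "N^2 \<le> 0" using p0
      by (simp add: mult_le_0_iff)
    then show ?thesis by simp
  qed
  then have "\<forall>i\<in>S. r i = 0" unfolding N_def using fin by (simp add: sum_nonneg_eq_0_iff)
  then have "\<forall>i\<in>S. (\<Sum>j\<in>S. A i j * z j) = \<mu> * z i" unfolding r_def by simp
  then show ?thesis using nz glob by blast
qed

lemma bil_decomp:
  assumes "\<forall>i j. A i j = W i j + \<theta> * v i * v j"
  shows "bil S A x y = \<theta> * ip S x v * ip S v y + bil S W x y"
proof -
  have "(\<Sum>j\<in>S. A i j * y j) = (\<Sum>j\<in>S. W i j * y j) + \<theta> * v i * ip S v y" for i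
    using assms unfolding ip_def by (simp add: algebra_simps sum.distrib sum_distrib_left)
  then show ?thesis unfolding bil_def ip_def
    by (simp add: algebra_simps sum.distrib sum_distrib_left sum_distrib_right)
qed

lemma core:
  fixes A W :: "nat \<Rightarrow> nat \<Rightarrow> real" and v w :: "nat \<Rightarrow> real"
  assumes fin: "finite S" and ne: "S \<noteq> {}" and sym: "\<forall>i\<in>S. \<forall>j\<in>S. A i j = A j i"
    and AW: "\<forall>i j. A i j = W i j + \<theta> * v i * v j"
    and th: "\<theta> > 0" and g: "\<gamma> > 0" and sg: "(\<Sum>i\<in>S. (v i)^2) \<ge> \<gamma>" and e0: "\<epsilon> \<ge> 0"
    and hW: "\<forall>y. (\<Sum>i\<in>S. (y i)^2) = 1 \<longrightarrow> (\<Sum>i\<in>S. (\<Sum>j\<in>S. W i j * y j)^2) \<le> \<epsilon>^2"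
    and top: "top_eigvec_sub S A w"
    and small: "\<epsilon> < \<theta> * \<gamma> / 2"
  shows "(\<Sum>i\<in>S. w i * v i)^2 \<ge> \<gamma> - 4 * \<epsilon>^2 / (\<theta>^2 * \<gamma>)"
proof -
  obtain lam where w1: "(\<Sum>i\<in>S. (w i)^2) = 1"
    and eig: "\<forall>i\<in>S. (\<Sum>j\<in>S. A i j * w j) = lam * w i"
    and maxp: "\<forall>mu u. (\<exists>i\<in>S. u i \<noteq> 0) \<and> (\<forall>i\<in>S. (\<Sum>j\<in>S. A i j * u j) = mu * u i) \<longrightarrow> mu \<le> lam"
    using top unfolding top_eigvec_sub_def by blast
  obtain z \<mu> where z1: "(\<Sum>i\<in>S. (z i)^2) = 1" and zeig: "\<forall>i\<in>S. (\<Sum>j\<in>S. A i j * z j) = \<mu> * z i"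
    and glob: "\<forall>y. bil S A y y \<le> \<mu> * (\<Sum>i\<in>S. (y i)^2)"
    using max_eig[OF fin ne sym] by blast
  have "\<exists>i\<in>S. z i \<noteq> 0"
  proof (rule ccontr)
    assume "\<not> ?thesis"
    then have "(\<Sum>i\<in>S. (z i)^2) = 0" by simp
    then show False using z1 by simp
  qed
  then have mul: "\<mu> \<le> lam" using maxp zeig by blast
  have hq: "bil S A y y \<le> lam * (\<Sum>i\<in>S. (y i)^2)" for y
  proof -
    have "\<mu> * (\<Sum>i\<in>S. (y i)^2) \<le> lam * (\<Sum>i\<in>S. (y i)^2)"
      using mul by (intro mult_right_mono) (auto intro: sum_nonneg)
    then show ?thesis using glob by (meson order.trans)
  qed
  have cs: "(\<Sum>i\<in>S. x i * (\<Sum>j\<in>S. W i j * y j))^2 \<le> (\<Sum>i\<in>S. (x i)^2) * \<epsilon>^2"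
    if "(\<Sum>i\<in>S. (y i)^2) = 1" for x y
  proof -
    have "(\<Sum>i\<in>S. x i * (\<Sum>j\<in>S. W i j * y j))^2 \<le> (\<Sum>i\<in>S. (x i)^2) * (\<Sum>i\<in>S. (\<Sum>j\<in>S. W i j * y j)^2)"
      by (rule Cauchy_Schwarz_ineq_sum)
    also have "\<dots> \<le> (\<Sum>i\<in>S. (x i)^2) * \<epsilon>^2"
      using hW that by (intro mult_left_mono) (auto intro: sum_nonneg)
    finally show ?thesis .
  qed
  define s where "s = (\<Sum>i\<in>S. (v i)^2)"
  define \<beta> where "\<beta> = (\<Sum>i\<in>S. w i * v i)"
  have sp: "s > 0" using sg g s_def by simp
  define u where "u = (\<lambda>i. v i / sqrt s)"
  have u1: "(\<Sum>i\<in>S. (u i)^2) = 1"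
  proof -
    have "(\<Sum>i\<in>S. (u i)^2) = (\<Sum>i\<in>S. (v i)^2 / s)"
      unfolding u_def using sp by (intro sum.cong refl) (simp add: power_divide)
    also have "\<dots> = s / s" unfolding s_def by (rule sum_divide_distrib[symmetric])
    finally show ?thesis using sp by simp
  qed
  have uv: "ip S u v = sqrt s" "ip S v u = sqrt s"
  proof -
    have "ip S u v = (\<Sum>i\<in>S. (v i)^2) / sqrt s"
      unfolding ip_def u_def by (simp add: sum_divide_distrib power2_eq_square)
    also have "\<dots> = sqrt s" using sp unfolding s_def[symmetric]
      by (metis less_eq_real_def real_div_sqrt)
    finally show "ip S u v = sqrt s" .
    then show "ip S v u = sqrt s" unfolding ip_def by (simp add: mult.commute)
  qed
  have "(bil S W u u)^2 \<le> \<epsilon>^2" using cs[OF u1, of u] u1 unfolding bil_def by simp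
  then have bWu: "bil S W u u \<ge> - \<epsilon>" using e0
    by (metis abs_le_square_iff abs_le_iff abs_of_nonneg minus_le_iff)
  have "bil S A u u = \<theta> * s + bil S W u u"
    using bil_decomp[OF AW] uv sp by (simp add: mult.assoc)
  then have lamlb: "lam \<ge> \<theta> * s - \<epsilon>" using hq[of u] u1 bWu by simp
  define r where "r = (\<lambda>i. w i - (\<beta> / s) * v i)"
  define R where "R = (\<Sum>i\<in>S. (r i)^2)"
  have rv: "ip S r v = 0"
  proof -
    have "ip S r v = (\<Sum>i\<in>S. w i * v i) - (\<beta> / s) * (\<Sum>i\<in>S. (v i)^2)"
      unfolding ip_def r_def
      by (simp add: algebra_simps sum_subtractf sum_distrib_left power2_eq_square)
    then show ?thesis using sp unfolding \<beta>_def[symmetric] s_def[symmetric] by simp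
  qed
  have rw: "ip S r w = 1 - \<beta>^2 / s"
  proof -
    have "ip S r w = (\<Sum>i\<in>S. (w i)^2) - (\<beta> / s) * (\<Sum>i\<in>S. w i * v i)"
      unfolding ip_def r_def
      by (simp add: algebra_simps sum_subtractf sum_distrib_left power2_eq_square)
    then show ?thesis using w1 \<beta>_def by (simp add: power2_eq_square)
  qed
  have Rrw: "R = ip S r w"
  proof -
    have e: "(r i)^2 = r i * w i - (\<beta> / s) * (r i * v i)" for i
      by (simp add: r_def algebra_simps power2_eq_square)
    have "R = (\<Sum>i\<in>S. r i * w i) - (\<beta> / s) * (\<Sum>i\<in>S. r i * v i)"
      unfolding R_def e by (simp add: sum_subtractf sum_distrib_left)
    then show ?thesis using rv unfolding ip_def by simp
  qed
  have R0: "R \<ge> 0" unfolding R_def by (simp add: sum_nonneg)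
  have Ww: "\<forall>i\<in>S. (\<Sum>j\<in>S. W i j * w j) = lam * w i - \<theta> * \<beta> * v i"
  proof
    fix i assume i: "i \<in> S"
    have "(\<Sum>j\<in>S. A i j * w j) = (\<Sum>j\<in>S. W i j * w j) + \<theta> * v i * \<beta>"
      using AW unfolding \<beta>_def by (simp add: algebra_simps sum.distrib sum_distrib_left)
    then show "(\<Sum>j\<in>S. W i j * w j) = lam * w i - \<theta> * \<beta> * v i" using eig i by simp
  qed
  have rWw: "(\<Sum>i\<in>S. r i * (\<Sum>j\<in>S. W i j * w j)) = lam * R"
  proof -
    have "(\<Sum>i\<in>S. r i * (\<Sum>j\<in>S. W i j * w j)) = (\<Sum>i\<in>S. r i * (lam * w i - \<theta> * \<beta> * v i))"
      using Ww by (intro sum.cong refl) simp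
    also have "\<dots> = lam * ip S r w - \<theta> * \<beta> * ip S r v"
      unfolding ip_def by (simp add: algebra_simps sum_subtractf sum_distrib_left)
    finally show ?thesis using rv Rrw by simp
  qed
  have "(lam * R)^2 \<le> R * \<epsilon>^2" using cs[OF w1, of r] rWw R_def by simp
  then have lR: "lam^2 * R \<le> \<epsilon>^2"
  proof (cases "R = 0")
    case True then show ?thesis by simp
  next
    case False
    then have Rp: "R > 0" using R0 by simp
    assume "(lam * R)^2 \<le> R * \<epsilon>^2"
    then have "R * (lam^2 * R) \<le> R * \<epsilon>^2" by (simp add: power2_eq_square algebra_simps)
    then show ?thesis using Rp by simp
  qed
  have hs: "\<theta> * s / 2 \<le> lam" using lamlb small sg th s_def
    by (smt (verit) mult_left_mono field_sum_of_halves)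
  have hs0: "\<theta> * s / 2 > 0" using th sp by simp
  have "(\<theta> * s / 2)^2 \<le> lam^2" using hs hs0 by (intro power_mono) auto
  then have "(\<theta> * s / 2)^2 * R \<le> lam^2 * R" using R0 by (intro mult_right_mono)
  with lR have "(\<theta> * s / 2)^2 * R \<le> \<epsilon>^2" by linarith
  then have Rb: "R \<le> 4 * \<epsilon>^2 / (\<theta>^2 * s^2)"
    using hs0 th sp by (simp add: field_simps power2_eq_square)
  have b2: "\<beta>^2 = s * (1 - R)" using Rrw rw sp by (simp add: field_simps)
  have "s * (1 - R) \<ge> s - 4 * \<epsilon>^2 / (\<theta>^2 * s)"
  proof -
    have "s * R \<le> s * (4 * \<epsilon>^2 / (\<theta>^2 * s^2))" using Rb sp by (intro mult_left_mono) auto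
    also have "\<dots> = 4 * \<epsilon>^2 / (\<theta>^2 * s)" using sp by (simp add: field_simps power2_eq_square)
    finally show ?thesis by (simp add: algebra_simps)
  qed
  moreover have "4 * \<epsilon>^2 / (\<theta>^2 * s) \<le> 4 * \<epsilon>^2 / (\<theta>^2 * \<gamma>)"
    using sg s_def g th by (intro divide_left_mono mult_left_mono) auto
  ultimately have "\<beta>^2 \<ge> \<gamma> - 4 * \<epsilon>^2 / (\<theta>^2 * \<gamma>)" using b2 sg unfolding s_def[symmetric] by linarith
  then show ?thesis unfolding \<beta>_def .
qed

lemma opnorm_le:
  fixes W :: "nat \<Rightarrow> nat \<Rightarrow> real"
  assumes fin: "finite S" and u: "(\<Sum>j\<in>S. (u j)^2) \<le> 1"
  shows "sqrt (\<Sum>i\<in>S. (\<Sum>j\<in>S. W i j * u j)^2) \<le> sub_opnorm S W"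
  unfolding sub_opnorm_def
proof (rule cSUP_upper)
  show "u \<in> {u. (\<Sum>j\<in>S. (u j)^2) \<le> 1}" using u by simp
  show "bdd_above ((\<lambda>u. sqrt (\<Sum>i\<in>S. (\<Sum>j\<in>S. W i j * u j)^2)) ` {u. (\<Sum>j\<in>S. (u j)^2) \<le> 1})"
  proof (rule bdd_aboveI2)
    fix y :: "nat \<Rightarrow> real" assume y: "y \<in> {u. (\<Sum>j\<in>S. (u j)^2) \<le> 1}"
    have "(\<Sum>j\<in>S. W i j * y j)^2 \<le> (\<Sum>j\<in>S. (W i j)^2)" for i
    proof -
      have "(\<Sum>j\<in>S. W i j * y j)^2 \<le> (\<Sum>j\<in>S. (W i j)^2) * (\<Sum>j\<in>S. (y j)^2)"
        by (rule Cauchy_Schwarz_ineq_sum)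
      also have "\<dots> \<le> (\<Sum>j\<in>S. (W i j)^2) * 1"
        using y by (intro mult_left_mono) (auto intro: sum_nonneg)
      finally show ?thesis by simp
    qed
    then have "(\<Sum>i\<in>S. (\<Sum>j\<in>S. W i j * y j)^2) \<le> (\<Sum>i\<in>S. \<Sum>j\<in>S. (W i j)^2)"
      by (intro sum_mono)
    then show "sqrt (\<Sum>i\<in>S. (\<Sum>j\<in>S. W i j * y j)^2) \<le> sqrt (\<Sum>i\<in>S. \<Sum>j\<in>S. (W i j)^2)"
      by simp
  qed
qed

theorem proposition5:
  fixes C0 :: real
  assumes "C0 > 0"
  shows "\<exists>C1>0. \<exists>C>0. \<exists>c0. 0 < c0 \<and> c0 \<le> 1/2 \<and>
    (\<forall>(n::nat) (m::nat) (\<theta>::real) (k::nat) (v::nat \<Rightarrow> real) (x::nat \<Rightarrow> nat \<Rightarrow> real)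
       (\<gamma>::real) (S::nat set) (w::nat \<Rightarrow> real).
      n \<ge> 2 \<longrightarrow> m \<ge> 1 \<longrightarrow> \<theta> > 0 \<longrightarrow> 1 \<le> k \<longrightarrow> k \<le> n \<longrightarrow>
      (\<forall>i\<ge>n. v i = 0) \<longrightarrow> (\<Sum>i<n. (v i)^2) = 1 \<longrightarrow> card {i. i < n \<and> v i \<noteq> 0} \<le> k \<longrightarrow>
      (\<forall>T. T \<subseteq> {..<n} \<longrightarrow> T \<noteq> {} \<longrightarrow>
         sub_opnorm T (\<lambda>i j. Gamma_hat m x i j - \<theta> * v i * v j)
           \<le> C0 * (1 + \<theta>) * sqrt (real (card T) * ln (real n) / real m)) \<longrightarrow>
      0 < \<gamma> \<longrightarrow> \<gamma> < 1 \<longrightarrow>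
      S \<subseteq> {..<n} \<longrightarrow> card S = k \<longrightarrow> sqrt (\<Sum>i\<in>S. (v i)^2) \<ge> sqrt \<gamma> \<longrightarrow>
      top_eigvec_sub S (Gamma_hat m x) w \<longrightarrow>
      (\<bar>\<Sum>i<n. w i * v i\<bar> \<ge> sqrt \<gamma> * sqrt (max (1 - C1 * (1 + \<theta>)^2 / (\<theta>^2 * \<gamma>^2)
                                                * (real k * ln (real n) / real m)) 0)
       \<and> (real m \<ge> C * (1 + \<theta>)^2 / (\<theta>^2 * \<gamma>^2) * real k * ln (real n)
            \<longrightarrow> \<bar>\<Sum>i<n. w i * v i\<bar> \<ge> c0 * \<gamma>)))"
proof (rule exI[of _ "4 * C0^2"], rule conjI, use assms in simp, rule exI[of _ "8 * C0^2"], rule conjI,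
    use assms in simp, rule exI[of _ "1/2::real"], intro conjI allI impI)
  show "0 < (1/2::real)" "(1/2::real) \<le> 1/2" by auto
  fix n m :: nat and \<theta> :: real and k :: nat and v :: "nat \<Rightarrow> real" and x :: "nat \<Rightarrow> nat \<Rightarrow> real"
    and \<gamma> :: real and S :: "nat set" and w :: "nat \<Rightarrow> real"
  assume n2: "n \<ge> 2" and m1: "m \<ge> 1" and th: "\<theta> > 0" and k1: "1 \<le> k" and kn: "k \<le> n"
    and vout: "\<forall>i\<ge>n. v i = 0" and vn: "(\<Sum>i<n. (v i)^2) = 1"
    and spar: "card {i. i < n \<and> v i \<noteq> 0} \<le> k"
    and hE: "\<forall>T. T \<subseteq> {..<n} \<longrightarrow> T \<noteq> {} \<longrightarrow>
         sub_opnorm T (\<lambda>i j. Gamma_hat m x i j - \<theta> * v i * v j)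
           \<le> C0 * (1 + \<theta>) * sqrt (real (card T) * ln (real n) / real m)"
    and g0: "0 < \<gamma>" and g1: "\<gamma> < 1" and Sn: "S \<subseteq> {..<n}" and cS: "card S = k"
    and sv: "sqrt (\<Sum>i\<in>S. (v i)^2) \<ge> sqrt \<gamma>" and top: "top_eigvec_sub S (Gamma_hat m x) w"
  define W where "W = (\<lambda>i j. Gamma_hat m x i j - \<theta> * v i * v j)"
  define D where "D = real k * ln (real n) / real m"
  define \<epsilon> where "\<epsilon> = C0 * (1 + \<theta>) * sqrt D"
  define E where "E = 4 * C0^2 * (1 + \<theta>)^2 / (\<theta>^2 * \<gamma>^2) * (real k * ln (real n) / real m)"
  define \<beta> where "\<beta> = (\<Sum>i\<in>S. w i * v i)"
  have fin: "finite S" using cS k1 card_ge_0_finite by force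
  have ne: "S \<noteq> {}" using cS k1 by auto
  have mpos: "real m > 0" using m1 by simp
  have lnp: "ln (real n) > 0" using n2 by simp
  have D0: "D \<ge> 0" unfolding D_def using lnp mpos by simp
  have e0: "\<epsilon> \<ge> 0" unfolding \<epsilon>_def using assms th D0 by simp
  have e2: "\<epsilon>^2 = C0^2 * (1 + \<theta>)^2 * D"
    unfolding \<epsilon>_def using D0 by (simp add: power_mult_distrib)
  have EQ: "E = 4 * \<epsilon>^2 / (\<theta>^2 * \<gamma>^2)" unfolding E_def e2 D_def by (simp add: mult_ac)
  have sumeq: "(\<Sum>i<n. w i * v i) = \<beta>"
  proof -
    have "(\<Sum>i\<in>S. w i * v i) = (\<Sum>i<n. w i * v i)"
      using Sn top unfolding top_eigvec_sub_def by (intro sum.mono_neutral_left) auto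
    then show ?thesis unfolding \<beta>_def by simp
  qed
  have sym: "\<forall>i\<in>S. \<forall>j\<in>S. Gamma_hat m x i j = Gamma_hat m x j i"
    unfolding Gamma_hat_def by (auto simp: mult.commute)
  have AW: "\<forall>i j. Gamma_hat m x i j = W i j + \<theta> * v i * v j" unfolding W_def by simp
  have sg: "(\<Sum>i\<in>S. (v i)^2) \<ge> \<gamma>" using sv by simp
  have hW: "\<forall>y. (\<Sum>i\<in>S. (y i)^2) = 1 \<longrightarrow> (\<Sum>i\<in>S. (\<Sum>j\<in>S. W i j * y j)^2) \<le> \<epsilon>^2"
  proof (intro allI impI)
    fix y :: "nat \<Rightarrow> real" assume y: "(\<Sum>i\<in>S. (y i)^2) = 1"
    have "sqrt (\<Sum>i\<in>S. (\<Sum>j\<in>S. W i j * y j)^2) \<le> sub_opnorm S W"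
      using y by (intro opnorm_le fin) simp
    also have "\<dots> \<le> \<epsilon>" using hE Sn ne cS unfolding W_def \<epsilon>_def D_def by auto
    finally show "(\<Sum>i\<in>S. (\<Sum>j\<in>S. W i j * y j)^2) \<le> \<epsilon>^2" by (rule sqrt_le_D)
  qed
  have main: "\<bar>\<beta>\<bar> \<ge> sqrt \<gamma> * sqrt (max (1 - E) 0)"
  proof (cases "E \<ge> 1")
    case True
    then show ?thesis by simp
  next
    case False
    have small: "\<epsilon> < \<theta> * \<gamma> / 2"
    proof (rule ccontr)
      assume "\<not> ?thesis"
      then have "\<theta> * \<gamma> / 2 \<le> \<epsilon>" by simp
      then have "(\<theta> * \<gamma> / 2)^2 \<le> \<epsilon>^2" using th g0 by (intro power_mono) auto
      then have "E \<ge> 1" unfolding EQ using th g0 by (simp add: field_simps power2_eq_square)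
      then show False using False by simp
    qed
    have "\<beta>^2 \<ge> \<gamma> - 4 * \<epsilon>^2 / (\<theta>^2 * \<gamma>)"
      unfolding \<beta>_def by (rule core[OF fin ne sym AW th g0 sg e0 hW top small])
    moreover have "\<gamma> - 4 * \<epsilon>^2 / (\<theta>^2 * \<gamma>) = \<gamma> * (1 - E)"
      unfolding EQ using th g0 by (simp add: field_simps power2_eq_square)
    ultimately have "\<gamma> * max (1 - E) 0 \<le> \<beta>^2" using False by simp
    then have "sqrt (\<gamma> * max (1 - E) 0) \<le> sqrt (\<beta>^2)" by (rule real_sqrt_le_mono)
    then show ?thesis by (simp add: real_sqrt_mult)
  qed
  show "sqrt \<gamma> * sqrt (max (1 - 4 * C0^2 * (1 + \<theta>)^2 / (\<theta>^2 * \<gamma>^2)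
           * (real k * ln (real n) / real m)) 0) \<le> \<bar>\<Sum>i<n. w i * v i\<bar>"
    using main unfolding sumeq E_def .
  assume mC: "real m \<ge> 8 * C0^2 * (1 + \<theta>)^2 / (\<theta>^2 * \<gamma>^2) * real k * ln (real n)"
  have "E = (8 * C0^2 * (1 + \<theta>)^2 / (\<theta>^2 * \<gamma>^2) * real k * ln (real n)) / (2 * real m)"
    unfolding E_def using mpos by (simp add: field_simps)
  also have "\<dots> \<le> real m / (2 * real m)" using mC mpos by (intro divide_right_mono) auto
  also have "\<dots> = 1/2" using mpos by simp
  finally have Eh: "E \<le> 1/2" .
  have "sqrt (1/2) \<le> sqrt (max (1 - E) 0)" using Eh by simp
  moreover have "(1/2::real) \<le> sqrt (1/2)" by (rule real_le_rsqrt) (simp add: power2_eq_square)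
  ultimately have h1: "1/2 \<le> sqrt (max (1 - E) 0)" by linarith
  have h2: "\<gamma> \<le> sqrt \<gamma>"
  proof -
    have "sqrt \<gamma> \<le> 1" using g1 by simp
    then have "sqrt \<gamma> * sqrt \<gamma> \<le> sqrt \<gamma> * 1" using g0 by (intro mult_left_mono) auto
    then show ?thesis using g0 by simp
  qed
  have "\<gamma> * (1/2) \<le> sqrt \<gamma> * sqrt (max (1 - E) 0)"
    using h1 h2 g0 by (intro mult_mono) auto
  then show "1/2 * \<gamma> \<le> \<bar>\<Sum>i<n. w i * v i\<bar>" using main sumeq by simp
qed
end
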